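(* Consider the two-level PFASST iteration for a linear problem with Gauss–Radau nodes and $L$ time steps as described in the context. Then PFASST converges if the CFL number $\mu$ is small enough. More precisely, there exist a fixed value $\mu^*_0>0$ and a constant $c>0$ independent of $\mu$ such that for all $0<\mu<\mu^*_0$, $$\rho\big(\mathbf{T}_{\mathrm{PFASST}}(\mu)\big)\le c\,\mu^{1/L},$$ where $\rho$ denotes the spectral radius.
   Context: Fix positive integers $L$ (time steps), $M$ (collocation nodes), $N$ (spatial degrees of freedom). Let $0<\tau_1<\dots<\tau_M=1$ be the (right) Gauss–Radau nodes on $[0,1]$, $\ell_j$ the Lagrange basis polynomials, $\mathbf{Q}=(q_{m,j})\in\mathbb{R}^{M\times M}$ with $q_{m,j}=\int_0^{\tau_m}\ell_j(s)\,ds$. Let $\mathbf{Q}_\Delta\in\mathbb{R}^{M\times M}$ be the lower-triangular weight matrix of a simpler quadrature rule. Let $\mathbf{A}\in\mathbb{C}^{N\times N}$ and $\mu>0$. Let $\mathbf{N}_M\in\mathbb{R}^{M\times M}$ have ones in its last column and zeros elsewhere, $\mathbf{H}=\mathbf{N}_M\otimes\mathbf{I}_N$, and $\mathbf{E}\in\mathbb{R}^{L\times L}$ with ones on the first subdiagonal and zeros elsewhere. Composite collocation matrix: $\mathbf{C}=\mathbf{I}_{LMN}-\mu\,\mathbf{I}_L\otimes\mathbf{Q}\otimes\mathbf{A}-\mathbf{E}\otimes\mathbf{H}$. Fine preconditioner: $\hat{\mathbf{P}}=\mathbf{I}_{LMN}-\mu\,\mathbf{I}_L\otimes\mathbf{Q}_\Delta\otimes\mathbf{A}$.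 Coarse level: integers $\tilde M\le M$, $\tilde N\le N$, $\tilde{\mathbf{Q}}_\Delta\in\mathbb{R}^{\tilde M\times\tilde M}$ lower triangular (simpler quadrature rule on the $\tilde M$ coarse Gauss–Radau nodes), $\tilde{\mathbf{A}}\in\mathbb{C}^{\tilde N\times\tilde N}$, $\tilde{\mathbf{N}}_{\tilde M}\in\mathbb{R}^{\tilde M\times\tilde M}$ with ones in its last column and zeros elsewhere, $\tilde{\mathbf{H}}=\tilde{\mathbf{N}}_{\tilde M}\otimes\mathbf{I}_{\tilde N}$, and coarse approximative block Gauss–Seidel preconditioner $\tilde{\mathbf{P}}=\mathbf{I}_{L\tilde M\tilde N}-\mu\,\mathbf{I}_L\otimes\tilde{\mathbf{Q}}_\Delta\otimes\tilde{\mathbf{A}}-\mathbf{E}\otimes\tilde{\mathbf{H}}$. Both $\hat{\mathbf{P}}$ and $\tilde{\mathbf{P}}$ are assumed invertible. Restriction and interpolation are $\mathbf{T}_F^C=\mathbf{I}_L\otimes\mathbf{T}_{F,Q}^C\otimes\mathbf{T}_{F,A}^C\in\mathbb{R}^{L\tilde M\tilde N\times LMN}$ and $\mathbf{T}_C^F=\mathbf{I}_L\otimes\mathbf{T}_{C,Q}^F\otimes\mathbf{T}_{C,A}^F\in\mathbb{R}^{LMN\times L\tilde M\tilde N}$ (no coarsening across time steps), where the restriction satisfies $(\mathbf{E}\otimes\tilde{\mathbf{H}})\mathbf{T}_F^C=\mathbf{T}_F^C(\mathbf{E}\otimes\mathbf{H})$. Smoother iteration matrix $\mathbf{T}_S(\mu)=\mathbf{I}_{LMN}-\hat{\mathbf{P}}^{-1}\mathbf{C}$,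 coarse-grid correction $\mathbf{T}_{\mathrm{CGC}}(\mu)=\mathbf{I}_{LMN}-\mathbf{T}_C^F\tilde{\mathbf{P}}^{-1}\mathbf{T}_F^C\mathbf{C}$, and PFASST iteration matrix $\mathbf{T}_{\mathrm{PFASST}}(\mu)=\mathbf{T}_S(\mu)\,\mathbf{T}_{\mathrm{CGC}}(\mu)$. *)

theory Defs
  imports "HOL-Analysis.Analysis"
          "Jordan_Normal_Form.Spectral_Radius"
          "Jordan_Normal_Form.Gauss_Jordan_Elimination"
begin

definition kron :: "'a :: times mat \<Rightarrow> 'a mat \<Rightarrow> 'a mat" where
  "kron A B = mat (dim_row A * dim_row B) (dim_col A * dim_col B)
     (\<lambda>(i, j). A $$ (i div dim_row B, j div dim_col B) * B $$ (i mod dim_row B, j mod dim_col B))"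

definition minv :: "complex mat \<Rightarrow> complex mat" where
  "minv A = the (mat_inverse A)"

definition cmat :: "real mat \<Rightarrow> complex mat" where
  "cmat A = map_mat complex_of_real A"

definition lagrange_basis :: "nat \<Rightarrow> (nat \<Rightarrow> real) \<Rightarrow> nat \<Rightarrow> real \<Rightarrow> real" where
  "lagrange_basis M tau j s = (\<Prod>k\<in>{0..<M} - {j}. (s - tau k) / (tau j - tau k))"

(* Right Gauss--Radau nodes on [0,1] (0-based): M distinct increasing nodes in (0,1] with
   tau_{M-1} = 1 whose interpolatory quadrature rule (weights = integrals of the Lagrange basis
   over [0,1]) is exact for all polynomials of degree at most 2M-2. This is the defining property
   of (right) Gauss--Radau quadrature; it determines the nodes uniquely. *)
definition gauss_radau_nodes :: "nat \<Rightarrow> (nat \<Rightarrow> real) \<Rightarrow> bool" where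
  "gauss_radau_nodes M tau \<longleftrightarrow>
     0 < tau 0 \<and> (\<forall>m. Suc m < M \<longrightarrow> tau m < tau (Suc m)) \<and> tau (M - 1) = 1 \<and>
     (\<forall>p :: real poly. degree p \<le> 2 * M - 2 \<longrightarrow>
        integral {0..1} (poly p) = (\<Sum>j<M. integral {0..1} (lagrange_basis M tau j) * poly p (tau j)))"

definition coll_Q :: "nat \<Rightarrow> (nat \<Rightarrow> real) \<Rightarrow> real mat" where
  "coll_Q M tau = mat M M (\<lambda>(m, j). integral {0..tau m} (lagrange_basis M tau j))"

definition last_col_ones :: "nat \<Rightarrow> real mat" where
  "last_col_ones M = mat M M (\<lambda>(i, j). if j = M - 1 then 1 else 0)"

definition subdiag :: "nat \<Rightarrow> real mat" where
  "subdiag L = mat L L (\<lambda>(i, j). if i = j + 1 then 1 else 0)"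

definition lower_triangular :: "'a :: zero mat \<Rightarrow> bool" where
  "lower_triangular A \<longleftrightarrow> (\<forall>i j. i < dim_row A \<longrightarrow> j < dim_col A \<longrightarrow> i < j \<longrightarrow> A $$ (i, j) = 0)"

definition coll_C :: "nat \<Rightarrow> nat \<Rightarrow> nat \<Rightarrow> real mat \<Rightarrow> complex mat \<Rightarrow> real \<Rightarrow> complex mat" where
  "coll_C L M N Q A mu =
     1\<^sub>m (L * M * N)
     - complex_of_real mu \<cdot>\<^sub>m kron (kron (1\<^sub>m L) (cmat Q)) A
     - kron (cmat (subdiag L)) (kron (cmat (last_col_ones M)) (1\<^sub>m N))"

definition prec_fine :: "nat \<Rightarrow> nat \<Rightarrow> nat \<Rightarrow> real mat \<Rightarrow> complex mat \<Rightarrow> real \<Rightarrow> complex mat" where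
  "prec_fine L M N QD A mu =
     1\<^sub>m (L * M * N) - complex_of_real mu \<cdot>\<^sub>m kron (kron (1\<^sub>m L) (cmat QD)) A"

definition prec_coarse :: "nat \<Rightarrow> nat \<Rightarrow> nat \<Rightarrow> real mat \<Rightarrow> complex mat \<Rightarrow> real \<Rightarrow> complex mat" where
  "prec_coarse L Mc Nc QDc Ac mu =
     1\<^sub>m (L * Mc * Nc)
     - complex_of_real mu \<cdot>\<^sub>m kron (kron (1\<^sub>m L) (cmat QDc)) Ac
     - kron (cmat (subdiag L)) (kron (cmat (last_col_ones Mc)) (1\<^sub>m Nc))"

end

theory Submission
  imports Defs
begin


definition mn :: "complex mat \<Rightarrow> real" where
  "mn X = (\<Sum>i<dim_row X. \<Sum>j<dim_col X. cmod (X $$ (i,j)))"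

lemma mn_nonneg: "0 \<le> mn X"
  unfolding mn_def by (intro sum_nonneg) auto

lemma mn_add: assumes "X \<in> carrier_mat a b" "Y \<in> carrier_mat a b" shows "mn (X + Y) \<le> mn X + mn Y"
proof -
  have "mn (X + Y) = (\<Sum>i<a. \<Sum>j<b. cmod (X $$ (i,j) + Y $$ (i,j)))"
    unfolding mn_def using assms by (intro sum.cong) auto
  also have "\<dots> \<le> (\<Sum>i<a. \<Sum>j<b. cmod (X $$ (i,j)) + cmod (Y $$ (i,j)))"
    by (intro sum_mono norm_triangle_ineq)
  also have "\<dots> = mn X + mn Y" unfolding mn_def using assms by (simp add: sum.distrib)
  finally show ?thesis .
qed

lemma mn_minus: assumes "X \<in> carrier_mat a b" "Y \<in> carrier_mat a b" shows "mn (X - Y) \<le> mn X + mn Y"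
proof -
  have "mn (X - Y) = (\<Sum>i<a. \<Sum>j<b. cmod (X $$ (i,j) - Y $$ (i,j)))"
    unfolding mn_def using assms by (intro sum.cong) auto
  also have "\<dots> \<le> (\<Sum>i<a. \<Sum>j<b. cmod (X $$ (i,j)) + cmod (Y $$ (i,j)))"
    by (intro sum_mono norm_triangle_ineq4)
  also have "\<dots> = mn X + mn Y" unfolding mn_def using assms by (simp add: sum.distrib)
  finally show ?thesis .
qed

lemma mn_ge: assumes "X \<in> carrier_mat a b" "Y \<in> carrier_mat a b" shows "mn X \<le> mn (X - Y) + mn Y"
proof -
  have "mn X = (\<Sum>i<a. \<Sum>j<b. cmod (X $$ (i,j)))"
    unfolding mn_def using assms by simp
  also have "\<dots> \<le> (\<Sum>i<a. \<Sum>j<b. cmod (X $$ (i,j) - Y $$ (i,j)) + cmod (Y $$ (i,j)))"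
    by (intro sum_mono) (metis add.commute norm_triangle_sub)
  also have "\<dots> = mn (X - Y) + mn Y" unfolding mn_def using assms by (simp add: sum.distrib)
  finally show ?thesis .
qed

lemma mn_smult: "mn (c \<cdot>\<^sub>m X) = cmod c * mn X"
  unfolding mn_def by (simp add: sum_distrib_left norm_mult)

lemma mn_one: "mn (1\<^sub>m n) = real n"
proof -
  have "mn (1\<^sub>m n) = (\<Sum>i<n. \<Sum>j<n. if i = j then 1 else 0)"
    unfolding mn_def by (intro sum.cong) auto
  also have "\<dots> = real n" by simp
  finally show ?thesis .
qed

lemma mn_zero: "mn (0\<^sub>m a b) = 0"
  unfolding mn_def by simp

lemma mn_mult: assumes X: "X \<in> carrier_mat a b" and Y: "Y \<in> carrier_mat b c"
  shows "mn (X * Y) \<le> mn X * mn Y"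
proof -
  have dims: "dim_row (X*Y) = a" "dim_col (X*Y) = c" using X Y by auto
  have ent: "(X*Y) $$ (i,j) = (\<Sum>k<b. X $$ (i,k) * Y $$ (k,j))" if "i < a" "j < c" for i j
    using X Y that by (simp add: scalar_prod_def lessThan_atLeast0)
  have "mn (X * Y) = (\<Sum>i<a. \<Sum>j<c. cmod (\<Sum>k<b. X $$ (i,k) * Y $$ (k,j)))"
    unfolding mn_def dims by (intro sum.cong refl) (simp add: ent)
  also have "\<dots> \<le> (\<Sum>i<a. \<Sum>j<c. \<Sum>k<b. cmod (X $$ (i,k)) * cmod (Y $$ (k,j)))"
    by (intro sum_mono order.trans[OF norm_sum]) (simp add: norm_mult)
  also have "\<dots> = (\<Sum>i<a. \<Sum>k<b. \<Sum>j<c. cmod (X $$ (i,k)) * cmod (Y $$ (k,j)))"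
    by (intro sum.cong refl sum.swap)
  also have "\<dots> = (\<Sum>i<a. \<Sum>k<b. cmod (X $$ (i,k)) * (\<Sum>j<c. cmod (Y $$ (k,j))))"
    by (simp add: sum_distrib_left)
  also have "\<dots> \<le> (\<Sum>i<a. \<Sum>k<b. cmod (X $$ (i,k)) * mn Y)"
  proof (intro sum_mono mult_left_mono norm_ge_zero)
    fix k assume k: "k \<in> {..<b}"
    have "(\<Sum>j<c. cmod (Y $$ (k,j))) \<le> (\<Sum>k<b. \<Sum>j<c. cmod (Y $$ (k,j)))"
      by (rule member_le_sum[OF k]) (auto intro: sum_nonneg)
    then show "(\<Sum>j<c. cmod (Y $$ (k,j))) \<le> mn Y" unfolding mn_def using Y by simp
  qed
  also have "\<dots> = mn X * mn Y" unfolding mn_def using X by (simp add: sum_distrib_right)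
  finally show ?thesis .
qed




lemma mat_sub_telescope: fixes X Y Z :: "complex mat"
  assumes "X \<in> carrier_mat a b" "Y \<in> carrier_mat a b" "Z \<in> carrier_mat a b"
  shows "(X - Y) + (Y - Z) = X - Z"
  using assms by (intro eq_matI) auto

lemma eig_bound: assumes A: "A \<in> carrier_mat n n" and ev: "eigenvalue A l"
  shows "cmod l ^ k \<le> mn (A ^\<^sub>m k)"
proof -
  from ev obtain v where evv: "eigenvector A v l" unfolding eigenvalue_def by auto
  have v: "v \<in> carrier_vec n" and v0: "v \<noteq> 0\<^sub>v n" using evv A unfolding eigenvector_def by auto
  have pw: "A ^\<^sub>m k *\<^sub>v v = l ^ k \<cdot>\<^sub>v v" by (rule eigenvector_pow[OF A evv])
  from v v0 obtain j0 where j0: "j0 < n" "v $ j0 \<noteq> 0"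
    by (metis eq_vecI carrier_vecD index_zero_vec(1) index_zero_vec(2))
  define m where "m = Max ((\<lambda>j. cmod (v $ j)) ` {..<n})"
  have ne: "(\<lambda>j. cmod (v $ j)) ` {..<n} \<noteq> {}" using j0 by auto
  from Max_in[OF _ ne] obtain i0 where i0: "i0 < n" "cmod (v $ i0) = m" unfolding m_def by auto
  have mge: "cmod (v $ j) \<le> m" if "j < n" for j unfolding m_def using that by (intro Max_ge) auto
  have mpos: "0 < m" using mge[OF j0(1)] j0(2) by (smt (verit) zero_less_norm_iff)
  have Ak: "A ^\<^sub>m k \<in> carrier_mat n n" using A by auto
  have "cmod (l ^ k) * m = cmod ((l ^ k \<cdot>\<^sub>v v) $ i0)" using i0 v by (simp add: norm_mult)
  also have "\<dots> = cmod ((A ^\<^sub>m k *\<^sub>v v) $ i0)" by (simp add: pw)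
  also have "(A ^\<^sub>m k *\<^sub>v v) $ i0 = (\<Sum>j<n. (A ^\<^sub>m k) $$ (i0,j) * v $ j)"
    using i0 v Ak A by (auto simp: scalar_prod_def lessThan_atLeast0 intro!: sum.cong)
  also have "cmod \<dots> \<le> (\<Sum>j<n. cmod ((A ^\<^sub>m k) $$ (i0,j)) * m)"
    by (intro order.trans[OF norm_sum] sum_mono) (simp add: norm_mult mult_left_mono mge)
  also have "\<dots> = (\<Sum>j<n. cmod ((A ^\<^sub>m k) $$ (i0,j))) * m" by (simp add: sum_distrib_right)
  also have "(\<Sum>j<n. cmod ((A ^\<^sub>m k) $$ (i0,j))) \<le> mn (A ^\<^sub>m k)"
  proof -
    have "(\<Sum>j<n. cmod ((A ^\<^sub>m k) $$ (i0,j))) \<le> (\<Sum>i<n. \<Sum>j<n. cmod ((A ^\<^sub>m k) $$ (i,j)))"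
      by (rule member_le_sum[of i0 "{..<n}" "\<lambda>i. \<Sum>j<n. cmod ((A ^\<^sub>m k) $$ (i,j))"]) (use i0 in \<open>auto intro: sum_nonneg\<close>)
    then show ?thesis unfolding mn_def carrier_matD[OF Ak] .
  qed
  hence "(\<Sum>j<n. cmod ((A ^\<^sub>m k) $$ (i0,j))) * m \<le> mn (A ^\<^sub>m k) * m"
    using mpos by (intro mult_right_mono) auto
  finally have "cmod (l ^ k) * m \<le> mn (A ^\<^sub>m k) * m" .
  with mpos show ?thesis by (simp add: norm_power)
qed

lemma sr_bound: assumes A: "A \<in> carrier_mat n n" and n: "0 < n"
  shows "spectral_radius A ^ k \<le> mn (A ^\<^sub>m k)"
proof -
  from spectral_radius_mem_max(1)[OF A n] obtain l where "l \<in> spectrum A" "spectral_radius A = norm l" by auto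
  then show ?thesis using eig_bound[OF A] unfolding spectrum_def by auto
qed

lemma pow_bound: assumes A: "A \<in> carrier_mat n n" and S: "mn A \<le> S" "0 \<le> S"
  shows "mn (A ^\<^sub>m k) \<le> real n * S ^ k"
proof (induct k)
  case 0 then show ?case using A by (simp add: mn_one)
next
  case (Suc k)
  have "mn (A ^\<^sub>m Suc k) \<le> mn (A ^\<^sub>m k) * mn A" using A by (simp add: mn_mult[of _ n n _ n])
  also have "\<dots> \<le> (real n * S ^ k) * S" using Suc S by (intro mult_mono) (auto simp: mn_nonneg)
  finally show ?case by (simp add: ac_simps)
qed

lemma pow_pert: assumes A: "A \<in> carrier_mat n n" and T: "T \<in> carrier_mat n n"
  and SA: "mn A \<le> S" and ST: "mn T \<le> S" and S1: "1 \<le> S"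
  shows "mn (T ^\<^sub>m k - A ^\<^sub>m k) \<le> real k * real n * S ^ k * mn (T - A)"
proof (induct k)
  case 0
  show ?case using A T by (simp add: mn_def)
next
  case (Suc k)
  have Tk: "T ^\<^sub>m k \<in> carrier_mat n n" and Ak: "A ^\<^sub>m k \<in> carrier_mat n n" using A T by auto
  have eq: "T ^\<^sub>m Suc k - A ^\<^sub>m Suc k = (T ^\<^sub>m k - A ^\<^sub>m k) * T + A ^\<^sub>m k * (T - A)"
  proof -
    have 1: "(T ^\<^sub>m k - A ^\<^sub>m k) * T = T ^\<^sub>m k * T - A ^\<^sub>m k * T"
      using Tk Ak T by (rule minus_mult_distrib_mat)
    have 2: "A ^\<^sub>m k * (T - A) = A ^\<^sub>m k * T - A ^\<^sub>m k * A"
      using Ak T A by (rule mult_minus_distrib_mat)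
    have "(T ^\<^sub>m k - A ^\<^sub>m k) * T + A ^\<^sub>m k * (T - A) = (T ^\<^sub>m k * T - A ^\<^sub>m k * T) + (A ^\<^sub>m k * T - A ^\<^sub>m k * A)"
      unfolding 1 2 ..
    also have "\<dots> = T ^\<^sub>m k * T - A ^\<^sub>m k * A"
      by (rule mat_sub_telescope) (use Tk Ak T A in auto)
    finally show ?thesis by simp
  qed
  have "mn (T ^\<^sub>m Suc k - A ^\<^sub>m Suc k) \<le> mn ((T ^\<^sub>m k - A ^\<^sub>m k) * T) + mn (A ^\<^sub>m k * (T - A))"
    unfolding eq using Tk Ak T A by (intro mn_add[of _ n n]) auto
  also have "\<dots> \<le> mn (T ^\<^sub>m k - A ^\<^sub>m k) * mn T + mn (A ^\<^sub>m k) * mn (T - A)"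
    using Tk Ak T A by (intro add_mono mn_mult[of _ n n _ n]) auto
  also have "\<dots> \<le> (real k * real n * S ^ k * mn (T - A)) * S + (real n * S ^ k) * mn (T - A)"
    using Suc pow_bound[OF A SA] S1 ST by (intro add_mono mult_mono) (auto simp: mn_nonneg)
  also have "\<dots> \<le> real (Suc k) * real n * S ^ Suc k * mn (T - A)"
  proof -
    have "S ^ k \<le> S ^ Suc k" using S1 by simp
    hence "(real n * S ^ k) * mn (T - A) \<le> (real n * S ^ Suc k) * mn (T - A)"
      by (intro mult_right_mono mult_left_mono) (auto simp: mn_nonneg)
    thus ?thesis by (simp add: algebra_simps)
  qed
  finally show ?case .
qed




lemma kron_dims[simp]: "dim_row (kron X Y) = dim_row X * dim_row Y" "dim_col (kron X Y) = dim_col X * dim_col Y"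
  unfolding kron_def by auto

lemma kron_carrier: "kron X Y \<in> carrier_mat (dim_row X * dim_row Y) (dim_col X * dim_col Y)"
  by (intro carrier_matI) (simp_all only: kron_dims)

lemma kron_index: "i < dim_row X * dim_row Y \<Longrightarrow> j < dim_col X * dim_col Y \<Longrightarrow>
  kron X Y $$ (i,j) = X $$ (i div dim_row Y, j div dim_col Y) * Y $$ (i mod dim_row Y, j mod dim_col Y)"
  unfolding kron_def by simp

lemma cmat_dims[simp]: "dim_row (cmat X) = dim_row X" "dim_col (cmat X) = dim_col X"
  unfolding cmat_def by auto

lemma cmat_index: "i < dim_row X \<Longrightarrow> j < dim_col X \<Longrightarrow> cmat X $$ (i,j) = complex_of_real (X $$ (i,j))"
  unfolding cmat_def by simp

definition lowblk :: "nat \<Rightarrow> nat \<Rightarrow> nat \<Rightarrow> complex mat \<Rightarrow> bool" where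
  "lowblk a b d X \<longleftrightarrow> (\<forall>i<dim_row X. \<forall>j<dim_col X. X $$ (i,j) \<noteq> 0 \<longrightarrow> j div b + d \<le> i div a)"

lemma lowblkD: "lowblk a b d X \<Longrightarrow> i < dim_row X \<Longrightarrow> j < dim_col X \<Longrightarrow> X $$ (i,j) \<noteq> 0 \<Longrightarrow> j div b + d \<le> i div a"
  unfolding lowblk_def by blast

lemma lowblk_mult: assumes X: "X \<in> carrier_mat r s" and Y: "Y \<in> carrier_mat s t"
  and lx: "lowblk a c d X" and ly: "lowblk c b e Y"
  shows "lowblk a b (d + e) (X * Y)"
  unfolding lowblk_def
proof (intro allI impI)
  fix i j assume i: "i < dim_row (X * Y)" and j: "j < dim_col (X * Y)" and nz: "(X * Y) $$ (i,j) \<noteq> 0"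
  have i': "i < r" and j': "j < t" using i j X Y by auto
  have "(X * Y) $$ (i,j) = (\<Sum>k<s. X $$ (i,k) * Y $$ (k,j))"
    using X Y i' j' by (simp add: scalar_prod_def lessThan_atLeast0)
  with nz have "(\<Sum>k<s. X $$ (i,k) * Y $$ (k,j)) \<noteq> 0" by simp
  then obtain k where k0: "k \<in> {..<s}" "X $$ (i,k) * Y $$ (k,j) \<noteq> 0"
    by (rule sum.not_neutral_contains_not_neutral)
  hence k: "k < s" "X $$ (i,k) \<noteq> 0" "Y $$ (k,j) \<noteq> 0" by auto
  have dX: "dim_row X = r" "dim_col X = s" and dY: "dim_row Y = s" "dim_col Y = t" using X Y by auto
  have 1: "k div c + d \<le> i div a" by (rule lowblkD[OF lx]) (use i' k dX in auto)
  have 2: "j div b + e \<le> k div c" by (rule lowblkD[OF ly]) (use j' k dY in auto)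
  from 1 2 show "j div b + (d + e) \<le> i div a" by linarith
qed

lemma lowblk_minus: assumes "X \<in> carrier_mat r s" "Y \<in> carrier_mat r s" "lowblk a b d X" "lowblk a b d Y"
  shows "lowblk a b d (X - Y)"
  unfolding lowblk_def
proof (intro allI impI)
  fix i j assume i: "i < dim_row (X - Y)" and j: "j < dim_col (X - Y)" and nz: "(X - Y) $$ (i,j) \<noteq> 0"
  have i': "i < r" "j < s" using i j assms(1,2) by auto
  hence "X $$ (i,j) \<noteq> 0 \<or> Y $$ (i,j) \<noteq> 0" using nz assms(1,2) by auto
  thus "j div b + d \<le> i div a"
  proof
    assume nx: "X $$ (i,j) \<noteq> 0" show ?thesis by (rule lowblkD[OF assms(3) _ _ nx]) (use i' assms(1) in auto)
  next
    assume ny: "Y $$ (i,j) \<noteq> 0" show ?thesis by (rule lowblkD[OF assms(4) _ _ ny]) (use i' assms(2) in auto)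
  qed
qed

lemma lowblk_one: "lowblk a a 0 (1\<^sub>m n)"
  unfolding lowblk_def by auto

lemma lowblk_kron_one: "lowblk (dim_row X) (dim_col X) 0 (kron (1\<^sub>m L) X)"
  unfolding lowblk_def
proof (intro allI impI)
  fix i j assume i: "i < dim_row (kron (1\<^sub>m L) X)" and j: "j < dim_col (kron (1\<^sub>m L) X)"
    and nz: "kron (1\<^sub>m L) X $$ (i,j) \<noteq> 0"
  have i': "i < L * dim_row X" and j': "j < L * dim_col X" using i j by auto
  have r: "0 < dim_row X" using i' by (cases "dim_row X") auto
  have c: "0 < dim_col X" using j' by (cases "dim_col X") auto
  have a: "i div dim_row X < L" using i' r by (simp add: less_mult_imp_div_less mult.commute)
  have b: "j div dim_col X < L" using j' c by (simp add: less_mult_imp_div_less mult.commute)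
  have e: "kron (1\<^sub>m L) X $$ (i,j) = (if i div dim_row X = j div dim_col X then 1 else 0) * X $$ (i mod dim_row X, j mod dim_col X)"
    using i' j' a b by (simp add: kron_index)
  have "i div dim_row X = j div dim_col X"
  proof (rule ccontr)
    assume "i div dim_row X \<noteq> j div dim_col X"
    with e nz show False by simp
  qed
  thus "j div dim_col X + 0 \<le> i div dim_row X" by simp
qed

lemma lowblk_kron_E: assumes Y: "Y \<in> carrier_mat K K"
  shows "lowblk K K 1 (kron (cmat (subdiag L)) Y)"
  unfolding lowblk_def
proof (intro allI impI)
  fix i j assume i: "i < dim_row (kron (cmat (subdiag L)) Y)" and j: "j < dim_col (kron (cmat (subdiag L)) Y)"
    and nz: "kron (cmat (subdiag L)) Y $$ (i,j) \<noteq> 0"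
  have sd: "dim_row (subdiag L) = L" "dim_col (subdiag L) = L" unfolding subdiag_def by auto
  have i': "i < L * K" and j': "j < L * K" using i j Y sd by auto
  have K: "0 < K" using i' by (cases K) auto
  have a: "i div K < L" using i' K by (simp add: less_mult_imp_div_less mult.commute)
  have b: "j div K < L" using j' K by (simp add: less_mult_imp_div_less mult.commute)
  have dY: "dim_row Y = K" "dim_col Y = K" using Y by auto
  have e: "kron (cmat (subdiag L)) Y $$ (i,j) = cmat (subdiag L) $$ (i div K, j div K) * Y $$ (i mod K, j mod K)"
    using kron_index[of i "cmat (subdiag L)" Y j] i' j' unfolding cmat_dims sd dY by simp
  from nz have "cmat (subdiag L) $$ (i div K, j div K) \<noteq> 0"
    unfolding e by auto
  hence "subdiag L $$ (i div K, j div K) \<noteq> 0" using a b sd by (simp add: cmat_index)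
  hence "i div K = j div K + 1" using a b unfolding subdiag_def by (auto split: if_splits)
  thus "j div K + 1 \<le> i div K" by simp
qed

lemma lowblk_pow: assumes X: "X \<in> carrier_mat n n" and l: "lowblk a a d X"
  shows "lowblk a a (k * d) (X ^\<^sub>m k)"
proof (induct k)
  case 0
  have "X ^\<^sub>m 0 = 1\<^sub>m (dim_row X)" by simp
  then show ?case using lowblk_one[of a "dim_row X"] by simp
next
  case (Suc k)
  have Xk: "X ^\<^sub>m k \<in> carrier_mat n n" using X by (rule pow_carrier_mat)
  have "lowblk a a (k * d + d) (X ^\<^sub>m k * X)"
    by (rule lowblk_mult[OF Xk X Suc l])
  moreover have "X ^\<^sub>m Suc k = X ^\<^sub>m k * X" by simp
  moreover have "Suc k * d = k * d + d" by simp
  ultimately show ?case by metis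
qed


lemma lowblk_zero: assumes X: "X \<in> carrier_mat n n" and nL: "n \<le> L * a" and l: "lowblk a a L X"
  shows "X = 0\<^sub>m n n"
proof (rule eq_matI)
  fix i j assume i: "i < dim_row (0\<^sub>m n n :: complex mat)" and j: "j < dim_col (0\<^sub>m n n :: complex mat)"
  have i': "i < L * a" using i nL by simp
  hence "0 < a" by (cases a) auto
  hence "i div a < L" using i' by (simp add: less_mult_imp_div_less mult.commute)
  show "X $$ (i,j) = 0\<^sub>m n n $$ (i,j)"
  proof (rule ccontr)
    assume "X $$ (i,j) \<noteq> 0\<^sub>m n n $$ (i,j)"
    hence "X $$ (i,j) \<noteq> 0" using i j by simp
    hence "j div a + L \<le> i div a" by (rule lowblkD[OF l, rotated 2]) (use i j X in auto)
    with \<open>i div a < L\<close> show False by simp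
  qed
qed (use X in auto)




lemma minv_props: assumes X: "X \<in> carrier_mat n n" and inv: "invertible_mat X"
  shows "minv X \<in> carrier_mat n n" "minv X * X = 1\<^sub>m n" "X * minv X = 1\<^sub>m n"
proof -
  from inv obtain B where XB: "X * B = 1\<^sub>m (dim_row X)" and BX: "B * X = 1\<^sub>m (dim_row B)"
    unfolding invertible_mat_def inverts_mat_def by blast
  have dX: "dim_row X = n" "dim_col X = n" using X by auto
  have cB: "dim_col B = n" using arg_cong[OF XB, of dim_col] dX by simp
  have rB: "dim_row B = n" using arg_cong[OF BX, of dim_col] dX by simp
  have B: "B \<in> carrier_mat n n" using cB rB by (intro carrier_matI) auto
  have U: "X \<in> Units (ring_mat TYPE(complex) n ())"
    unfolding Units_def ring_mat_def using X B XB BX dX rB by auto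
  have "mat_inverse X \<noteq> None" using mat_inverse(1)[OF X, where b = "()"] U by blast
  then obtain B' where "mat_inverse X = Some B'" by auto
  from mat_inverse(2)[OF X this] this
  show "minv X \<in> carrier_mat n n" "minv X * X = 1\<^sub>m n" "X * minv X = 1\<^sub>m n"
    unfolding minv_def by auto
qed

lemma unitri_inv: assumes F: "F \<in> carrier_mat m m" and l: "lowblk a a 1 F"
  shows "\<exists>G. G \<in> carrier_mat m m \<and> G * (1\<^sub>m m - F) = 1\<^sub>m m"
proof -
  have Fz: "F $$ (i,j) = 0" if "i < m" "j < m" "i \<le> j" for i j
  proof (rule ccontr)
    assume "F $$ (i,j) \<noteq> 0"
    hence "j div a + 1 \<le> i div a" by (rule lowblkD[OF l, rotated 2]) (use that F in auto)
    moreover have "i div a \<le> j div a" using that(3) by (rule div_le_mono)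
    ultimately show False by linarith
  qed
  define D where "D = 1\<^sub>m m - F"
  have D: "D \<in> carrier_mat m m" unfolding D_def using F by auto
  have Dent: "D $$ (i,j) = (if i = j then 1 else 0)" if "i < m" "j < m" "i \<le> j" for i j
    unfolding D_def using that F Fz[OF that] by simp
  have "det D = prod_list (diag_mat D)"
    by (rule det_lower_triangular[OF _ D]) (use Dent in auto)
  also have "diag_mat D = map (\<lambda>i. 1) [0..<m]"
    unfolding diag_mat_def using D Dent by (auto intro!: map_cong)
  also have "prod_list \<dots> = 1" by (induct m) auto
  finally have "det D \<noteq> 0" by simp
  from det_non_zero_imp_unit[OF D this, of "()"]
  obtain G where "G \<in> carrier_mat m m" "G * D = 1\<^sub>m m"
    unfolding Units_def ring_mat_def by auto
  thus ?thesis unfolding D_def by blast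
qed




lemma lin_a: assumes "X \<in> carrier_mat n n" "Y \<in> carrier_mat n n" "X - Y = 1\<^sub>m n"
  shows "X - 1\<^sub>m n = (Y :: complex mat)"
proof (rule eq_matI)
  fix i j assume ij: "i < dim_row Y" "j < dim_col Y"
  have "(X - Y) $$ (i,j) = 1\<^sub>m n $$ (i,j)" using assms(3) by simp
  thus "(X - 1\<^sub>m n) $$ (i,j) = Y $$ (i,j)" using assms(1,2) ij by (auto split: if_splits simp: algebra_simps)
qed (use assms in auto)

lemma lin_b: assumes "X \<in> carrier_mat n n" shows "X = (X - 1\<^sub>m n) + (1\<^sub>m n :: complex mat)"
  by (rule eq_matI) (use assms in auto)

lemma lin_c: assumes "ZC \<in> carrier_mat n n" "Km \<in> carrier_mat n n" "F \<in> carrier_mat n n"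
  "C = 1\<^sub>m n - c \<cdot>\<^sub>m Km - F"
  shows "(1\<^sub>m n - (ZC + C)) - F = c \<cdot>\<^sub>m Km - (ZC :: complex mat)"
  by (rule eq_matI) (use assms in auto)

lemma lin_d: assumes "Bt \<in> carrier_mat m m" "Ft \<in> carrier_mat m m"
  shows "(1\<^sub>m m - c \<cdot>\<^sub>m Bt) - Ft = (1\<^sub>m m - Ft) - c \<cdot>\<^sub>m (Bt :: complex mat)"
  by (rule eq_matI) (use assms in auto)

lemma lin_f: assumes "R \<in> carrier_mat m n" "RK \<in> carrier_mat m n" "RF \<in> carrier_mat m n" "BR \<in> carrier_mat m n"
  shows "(R - c \<cdot>\<^sub>m RK) - RF = ((R - c \<cdot>\<^sub>m BR) - RF) + c \<cdot>\<^sub>m (BR - (RK :: complex mat))"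
  by (rule eq_matI) (use assms in \<open>auto simp: algebra_simps\<close>)

lemma lin_g: assumes "PR \<in> carrier_mat n n" "U \<in> carrier_mat n n"
  shows "(1\<^sub>m n - (PR + c \<cdot>\<^sub>m U)) - (1\<^sub>m n - PR) = (- c) \<cdot>\<^sub>m (U :: complex mat)"
  by (rule eq_matI) (use assms in auto)

lemma lin_h: assumes "X \<in> carrier_mat n n" "Y \<in> carrier_mat n n"
  shows "X - (0\<^sub>m n n :: complex mat) = X"
  by (rule eq_matI) (use assms in auto)

lemma mn_cr: "mn (complex_of_real c \<cdot>\<^sub>m X) = \<bar>c\<bar> * mn X"
  by (simp add: mn_smult)

lemma mn_cr': "mn ((- complex_of_real c) \<cdot>\<^sub>m X) = \<bar>c\<bar> * mn X"
  by (simp add: mn_smult)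




declare minus_carrier_mat[simp]

theorem theorem2:
  fixes L M N Mc Nc :: nat
    and tau :: "nat \<Rightarrow> real"
    and QD QDc :: "real mat"
    and A Ac :: "complex mat"
    and TFCQ TFCA TCFQ TCFA :: "real mat"
  assumes "0 < L" and "0 < M" and "0 < N"
    and "Mc \<le> M" and "Nc \<le> N"
    and "gauss_radau_nodes M tau"
    and "QD \<in> carrier_mat M M" and "lower_triangular QD"
    and "QDc \<in> carrier_mat Mc Mc" and "lower_triangular QDc"
    and "A \<in> carrier_mat N N" and "Ac \<in> carrier_mat Nc Nc"
    and "TFCQ \<in> carrier_mat Mc M" and "TFCA \<in> carrier_mat Nc N"
    and "TCFQ \<in> carrier_mat M Mc" and "TCFA \<in> carrier_mat N Nc"
    and "kron (cmat (subdiag L)) (kron (cmat (last_col_ones Mc)) (1\<^sub>m Nc))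
           * kron (1\<^sub>m L) (kron (cmat TFCQ) (cmat TFCA))
         = kron (1\<^sub>m L) (kron (cmat TFCQ) (cmat TFCA))
           * kron (cmat (subdiag L)) (kron (cmat (last_col_ones M)) (1\<^sub>m N))"
  shows "\<exists>mu0 c :: real. 0 < mu0 \<and> 0 < c \<and>
    (\<forall>mu. 0 < mu \<and> mu < mu0 \<and>
          invertible_mat (prec_fine L M N QD A mu) \<and>
          invertible_mat (prec_coarse L Mc Nc QDc Ac mu) \<longrightarrow>
      (let C = coll_C L M N (coll_Q M tau) A mu;
           TS = 1\<^sub>m (L * M * N) - minv (prec_fine L M N QD A mu) * C;
           TCGC = 1\<^sub>m (L * M * N)
                  - kron (1\<^sub>m L) (kron (cmat TCFQ) (cmat TCFA))
                    * minv (prec_coarse L Mc Nc QDc Ac mu)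
                    * kron (1\<^sub>m L) (kron (cmat TFCQ) (cmat TFCA)) * C
       in spectral_radius (TS * TCGC) \<le> c * mu powr (1 / real L)))"
proof -
  define K where "K = M * N"
  define Kc where "Kc = Mc * Nc"
  define n where "n = L * M * N"
  define m where "m = L * Mc * Nc"
  have nK: "n = L * K" unfolding n_def K_def by simp
  have mK: "m = L * Kc" unfolding m_def Kc_def by simp
  have npos: "0 < n" unfolding n_def using assms(1-3) by simp
  define Km where "Km = kron (kron (1\<^sub>m L) (cmat (coll_Q M tau))) A"
  define Bh where "Bh = kron (kron (1\<^sub>m L) (cmat QD)) A"
  define Bt where "Bt = kron (kron (1\<^sub>m L) (cmat QDc)) Ac"
  define Y where "Y = kron (cmat (last_col_ones M)) (1\<^sub>m N)"
  define Yc where "Yc = kron (cmat (last_col_ones Mc)) (1\<^sub>m Nc)"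
  define F where "F = kron (cmat (subdiag L)) Y"
  define Ft where "Ft = kron (cmat (subdiag L)) Yc"
  define Xc where "Xc = kron (cmat TCFQ) (cmat TCFA)"
  define Xr where "Xr = kron (cmat TFCQ) (cmat TFCA)"
  define Pc where "Pc = kron (1\<^sub>m L) Xc"
  define R where "R = kron (1\<^sub>m L) Xr"
  have dQ: "dim_row (coll_Q M tau) = M" "dim_col (coll_Q M tau) = M" unfolding coll_Q_def by auto
  have dsd: "dim_row (subdiag L) = L" "dim_col (subdiag L) = L" unfolding subdiag_def by auto
  have dlc: "dim_row (last_col_ones M) = M" "dim_col (last_col_ones M) = M"
     "dim_row (last_col_ones Mc) = Mc" "dim_col (last_col_ones Mc) = Mc" unfolding last_col_ones_def by auto
  have dA: "dim_row A = N" "dim_col A = N" "dim_row Ac = Nc" "dim_col Ac = Nc"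
    "dim_row QD = M" "dim_col QD = M" "dim_row QDc = Mc" "dim_col QDc = Mc"
    "dim_row TCFQ = M" "dim_col TCFQ = Mc" "dim_row TCFA = N" "dim_col TCFA = Nc"
    "dim_row TFCQ = Mc" "dim_col TFCQ = M" "dim_row TFCA = Nc" "dim_col TFCA = N"
    using assms(7,9,11-16) by auto
  have Y: "Y \<in> carrier_mat K K" unfolding Y_def K_def by (intro carrier_matI) (simp_all add: dlc)
  have Yc: "Yc \<in> carrier_mat Kc Kc" unfolding Yc_def Kc_def by (intro carrier_matI) (simp_all add: dlc)
  have Xc: "Xc \<in> carrier_mat K Kc" unfolding Xc_def K_def Kc_def by (intro carrier_matI) (simp_all add: dA)
  have Xr: "Xr \<in> carrier_mat Kc K" unfolding Xr_def K_def Kc_def by (intro carrier_matI) (simp_all add: dA)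
  have Km: "Km \<in> carrier_mat n n" unfolding Km_def n_def by (intro carrier_matI) (simp_all add: dA dQ)
  have Bh: "Bh \<in> carrier_mat n n" unfolding Bh_def n_def by (intro carrier_matI) (simp_all add: dA)
  have Bt: "Bt \<in> carrier_mat m m" unfolding Bt_def m_def by (intro carrier_matI) (simp_all add: dA)
  have F: "F \<in> carrier_mat n n" unfolding F_def nK using Y by (intro carrier_matI) (simp_all add: dsd)
  have Ft: "Ft \<in> carrier_mat m m" unfolding Ft_def mK using Yc by (intro carrier_matI) (simp_all add: dsd)
  have Pc: "Pc \<in> carrier_mat n m" unfolding Pc_def nK mK using Xc by (intro carrier_matI) simp_all
  have R: "R \<in> carrier_mat m n" unfolding R_def nK mK using Xr by (intro carrier_matI) simp_all
  have hyp: "Ft * R = R * F" using assms(17) unfolding Ft_def R_def F_def Yc_def Y_def Xr_def .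
  have lF: "lowblk K K 1 F" unfolding F_def by (rule lowblk_kron_E[OF Y])
  have lFt: "lowblk Kc Kc 1 Ft" unfolding Ft_def by (rule lowblk_kron_E[OF Yc])
  have lPc: "lowblk K Kc 0 Pc" unfolding Pc_def using lowblk_kron_one[of Xc L] Xc by auto
  have lR: "lowblk Kc K 0 R" unfolding R_def using lowblk_kron_one[of Xr L] Xr by auto
  define W where "W = 1\<^sub>m n - Pc * R"
  have PR: "Pc * R \<in> carrier_mat n n" using Pc R by auto
  have W: "W \<in> carrier_mat n n" unfolding W_def using PR by auto
  have lW: "lowblk K K 0 W" unfolding W_def
    by (rule lowblk_minus[OF _ PR lowblk_one]) (use lowblk_mult[OF Pc R lPc lR] in auto)
  define T0 where "T0 = F * W"
  have T0: "T0 \<in> carrier_mat n n" unfolding T0_def using F W by auto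
  have lT0: "lowblk K K 1 T0" unfolding T0_def using lowblk_mult[OF F W lF lW] by simp
  have T0L: "T0 ^\<^sub>m L = 0\<^sub>m n n"
    by (rule lowblk_zero[OF _ _ lowblk_pow[OF T0 lT0, of L, simplified]]) (use T0 nK in auto)
  obtain G where G: "G \<in> carrier_mat m m" "G * (1\<^sub>m m - Ft) = 1\<^sub>m m"
    using unitri_inv[OF Ft lFt] by blast
  define nKm where "nKm = mn Km"
  define nBh where "nBh = mn Bh"
  define nBt where "nBt = mn Bt"
  define nG where "nG = mn G"
  define nF where "nF = mn F"
  define nPc where "nPc = mn Pc"
  define nR where "nR = mn R"
  define nW where "nW = mn W"
  define b1 where "b1 = nKm + 2 * real n * nBh * (real n + nKm + nF)"
  define b2 where "b2 = nPc * (2 * nG) * (nBt * nR + nR * nKm)"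
  define bD where "bD = b1 * (b2 + nW) + nF * b2"
  define S where "S = 1 + mn T0 + bD"
  define c0 where "c0 = real L * real n * S ^ L * bD"
  define D0 where "D0 = 2 * (1 + nBh + nG * nBt)"
  define mu0 where "mu0 = 1 / D0"
  define c where "c = (c0 + 1) powr (1 / real L)"
  have nn: "0 \<le> nKm" "0 \<le> nBh" "0 \<le> nBt" "0 \<le> nG" "0 \<le> nF" "0 \<le> nPc" "0 \<le> nR" "0 \<le> nW" "0 \<le> mn T0"
    unfolding nKm_def nBh_def nBt_def nG_def nF_def nPc_def nR_def nW_def by (simp_all add: mn_nonneg)
  have b1: "0 \<le> b1" unfolding b1_def using nn by simp
  have b2: "0 \<le> b2" unfolding b2_def using nn by simp
  have bD: "0 \<le> bD" unfolding bD_def using nn b1 b2 by simp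
  have S1: "1 \<le> S" unfolding S_def using nn bD by simp
  have c0: "0 \<le> c0" unfolding c0_def using bD S1 by simp
  have den: "0 < D0" unfolding D0_def using nn(2) mult_nonneg_nonneg[OF nn(4) nn(3)] by simp
  have mu0: "0 < mu0" unfolding mu0_def using den by simp
  have cpos: "0 < c" unfolding c_def using c0 by simp
  have main: "spectral_radius (TS * TCGC) \<le> c * mu powr (1 / real L)"
    if mu: "0 < mu" "mu < mu0" and inv1: "invertible_mat (prec_fine L M N QD A mu)"
      and inv2: "invertible_mat (prec_coarse L Mc Nc QDc Ac mu)"
      and TS: "TS = 1\<^sub>m n - minv (prec_fine L M N QD A mu) * coll_C L M N (coll_Q M tau) A mu"
      and TCGC: "TCGC = 1\<^sub>m n - Pc * minv (prec_coarse L Mc Nc QDc Ac mu) * R * coll_C L M N (coll_Q M tau) A mu"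
    for mu TS TCGC
  proof -
    define cm where "cm = complex_of_real mu"
    define C where "C = coll_C L M N (coll_Q M tau) A mu"
    define Ph where "Ph = prec_fine L M N QD A mu"
    define Pt where "Pt = prec_coarse L Mc Nc QDc Ac mu"
    have Ceq: "C = 1\<^sub>m n - cm \<cdot>\<^sub>m Km - F"
      unfolding C_def coll_C_def cm_def Km_def F_def Y_def n_def by simp
    have Pheq: "Ph = 1\<^sub>m n - cm \<cdot>\<^sub>m Bh"
      unfolding Ph_def prec_fine_def cm_def Bh_def n_def by simp
    have Pteq: "Pt = 1\<^sub>m m - cm \<cdot>\<^sub>m Bt - Ft"
      unfolding Pt_def prec_coarse_def cm_def Bt_def Ft_def Yc_def m_def by simp
    have C: "C \<in> carrier_mat n n" unfolding Ceq using Km F by auto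
    have Ph: "Ph \<in> carrier_mat n n" unfolding Pheq using Bh by auto
    have Pt: "Pt \<in> carrier_mat m m" unfolding Pteq using Bt Ft by auto
    have muD: "mu * D0 < 1" using mu(2) den unfolding mu0_def by (simp add: less_divide_eq)
    have muD': "mu * D0 = 2 * mu + 2 * (mu * nBh) + 2 * (mu * (nG * nBt))" unfolding D0_def by (simp add: algebra_simps)
    have p1: "0 \<le> mu * nBh" "0 \<le> mu * (nG * nBt)" using mu nn by simp_all
    have mu1: "mu \<le> 1" using muD muD' p1 by linarith
    have muBh: "mu * nBh \<le> 1 / 2" using muD muD' p1 mu by linarith
    have muBt: "mu * (nG * nBt) \<le> 1 / 2" using muD muD' p1 mu by linarith
    have mncm: "\<And>X. mn (cm \<cdot>\<^sub>m X) = mu * mn X" unfolding cm_def using mu by (simp add: mn_cr)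
    define Pi where "Pi = minv Ph"
    have Pi: "Pi \<in> carrier_mat n n" "Pi * Ph = 1\<^sub>m n"
      using minv_props[OF Ph inv1[folded Ph_def]] unfolding Pi_def by auto
    have e1: "Pi * Ph = Pi - cm \<cdot>\<^sub>m (Pi * Bh)"
    proof -
      have "Pi * Ph = Pi * 1\<^sub>m n - Pi * (cm \<cdot>\<^sub>m Bh)" unfolding Pheq
        by (rule mult_minus_distrib_mat[OF Pi(1)]) (use Bh in auto)
      also have "Pi * 1\<^sub>m n = Pi" using Pi(1) by simp
      also have "Pi * (cm \<cdot>\<^sub>m Bh) = cm \<cdot>\<^sub>m (Pi * Bh)" by (rule mult_smult_distrib[OF Pi(1) Bh])
      finally show ?thesis .
    qed
    have e2: "Pi - cm \<cdot>\<^sub>m (Pi * Bh) = 1\<^sub>m n" using e1 Pi(2) by simp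
    have PiB: "Pi * Bh \<in> carrier_mat n n" using Pi Bh by auto
    have mnPi: "mn Pi \<le> 2 * real n"
    proof -
      have 1: "mn Pi \<le> mn (Pi - cm \<cdot>\<^sub>m (Pi * Bh)) + mn (cm \<cdot>\<^sub>m (Pi * Bh))"
        by (rule mn_ge[of _ n n]) (use Pi PiB in auto)
      have 2: "mn (Pi - cm \<cdot>\<^sub>m (Pi * Bh)) = real n" unfolding e2 by (rule mn_one)
      have 3: "mn (cm \<cdot>\<^sub>m (Pi * Bh)) = mu * mn (Pi * Bh)" by (rule mncm)
      have 4: "mn (Pi * Bh) \<le> mn Pi * nBh" unfolding nBh_def by (rule mn_mult[OF Pi(1) Bh])
      have 5: "mu * mn (Pi * Bh) \<le> mu * (mn Pi * nBh)" by (rule mult_left_mono[OF 4]) (use mu in simp)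
      have 6: "mu * (mn Pi * nBh) = mn Pi * (mu * nBh)" by (simp add: ac_simps)
      have 7: "mn Pi * (mu * nBh) \<le> mn Pi * (1/2)" by (rule mult_left_mono[OF muBh mn_nonneg])
      from 1 2 3 5 6 7 show ?thesis by linarith
    qed
    define Z where "Z = Pi - 1\<^sub>m n"
    have Zeq: "Z = cm \<cdot>\<^sub>m (Pi * Bh)" unfolding Z_def by (rule lin_a[OF Pi(1) _ e2]) (use PiB in auto)
    have Z: "Z \<in> carrier_mat n n" unfolding Z_def using Pi by auto
    have mnZ: "mn Z \<le> mu * (2 * real n * nBh)"
    proof -
      have "mn Z = mu * mn (Pi * Bh)" unfolding Zeq mncm ..
      also have "\<dots> \<le> mu * (mn Pi * nBh)" unfolding nBh_def using mn_mult[OF Pi(1) Bh] mu by simp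
      also have "\<dots> \<le> mu * (2 * real n * nBh)" using mnPi nn mu by (intro mult_left_mono mult_right_mono) auto
      finally show ?thesis .
    qed
    have mnC: "mn C \<le> real n + nKm + nF"
    proof -
      have "mn C \<le> mn (1\<^sub>m n - cm \<cdot>\<^sub>m Km) + mn F" unfolding Ceq by (rule mn_minus[of _ n n]) (use Km F in auto)
      also have "mn (1\<^sub>m n - cm \<cdot>\<^sub>m Km) \<le> mn (1\<^sub>m n) + mn (cm \<cdot>\<^sub>m Km)" by (rule mn_minus[of _ n n]) (use Km in auto)
      also have "mn (cm \<cdot>\<^sub>m Km) \<le> nKm" unfolding mncm nKm_def using mu1 mu mn_nonneg[of Km]
        by (simp add: mult_left_le_one_le)
      finally show ?thesis unfolding nF_def mn_one by simp
    qed
    define TS' where "TS' = 1\<^sub>m n - Pi * C"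
    have TSe: "TS = TS'" unfolding TS TS'_def Pi_def Ph_def C_def ..
    have TS': "TS' \<in> carrier_mat n n" unfolding TS'_def using Pi C by auto
    have ZC: "Z * C \<in> carrier_mat n n" using Z C by auto
    have PiC: "Pi * C = Z * C + C"
    proof -
      have "Pi * C = (Z + 1\<^sub>m n) * C" unfolding Z_def using lin_b[OF Pi(1)] by simp
      also have "\<dots> = Z * C + 1\<^sub>m n * C" by (rule add_mult_distrib_mat[OF Z _ C]) auto
      finally show ?thesis using C by simp
    qed
    have TSF: "TS' - F = cm \<cdot>\<^sub>m Km - Z * C"
      unfolding TS'_def PiC by (rule lin_c[OF ZC Km F Ceq])
    have mnTSF: "mn (TS' - F) \<le> mu * b1"
    proof -
      have "mn (TS' - F) \<le> mn (cm \<cdot>\<^sub>m Km) + mn (Z * C)" unfolding TSF by (rule mn_minus[of _ n n]) (use Km ZC in auto)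
      also have "mn (Z * C) \<le> mn Z * mn C" by (rule mn_mult[OF Z C])
      also have "\<dots> \<le> (mu * (2 * real n * nBh)) * (real n + nKm + nF)"
        using mnZ mnC by (intro mult_mono) (use mu nn b1 b2 in \<open>auto simp: mn_nonneg\<close>)
      finally show ?thesis unfolding mncm b1_def nKm_def by (simp add: algebra_simps)
    qed
    define Ti where "Ti = minv Pt"
    have Ti: "Ti \<in> carrier_mat m m" "Ti * Pt = 1\<^sub>m m" "Pt * Ti = 1\<^sub>m m"
      using minv_props[OF Pt inv2[folded Pt_def]] unfolding Ti_def by auto
    have Pteq2: "Pt = (1\<^sub>m m - Ft) - cm \<cdot>\<^sub>m Bt" unfolding Pteq by (rule lin_d[OF Bt Ft])
    have GPt: "G * Pt = 1\<^sub>m m - cm \<cdot>\<^sub>m (G * Bt)"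
    proof -
      have "G * Pt = G * (1\<^sub>m m - Ft) - G * (cm \<cdot>\<^sub>m Bt)" unfolding Pteq2
        by (rule mult_minus_distrib_mat[OF G(1)]) (use Bt Ft in auto)
      also have "G * (cm \<cdot>\<^sub>m Bt) = cm \<cdot>\<^sub>m (G * Bt)" by (rule mult_smult_distrib[OF G(1) Bt])
      finally show ?thesis unfolding G(2) .
    qed
    have GB: "G * Bt \<in> carrier_mat m m" using G Bt by auto
    have Geq: "G = Ti - cm \<cdot>\<^sub>m (G * Bt * Ti)"
    proof -
      have "G = G * (Pt * Ti)" using Ti(3) G by simp
      also have "\<dots> = (G * Pt) * Ti" using G Pt Ti by simp
      also have "\<dots> = (1\<^sub>m m - cm \<cdot>\<^sub>m (G * Bt)) * Ti" unfolding GPt ..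
      also have "\<dots> = 1\<^sub>m m * Ti - (cm \<cdot>\<^sub>m (G * Bt)) * Ti"
        by (rule minus_mult_distrib_mat[OF _ _ Ti(1)]) (use GB in auto)
      also have "1\<^sub>m m * Ti = Ti" using Ti(1) by simp
      also have "(cm \<cdot>\<^sub>m (G * Bt)) * Ti = cm \<cdot>\<^sub>m (G * Bt * Ti)" by (rule mult_smult_assoc_mat[OF GB Ti(1)])
      finally show ?thesis .
    qed
    have mnTi: "mn Ti \<le> 2 * nG"
    proof -
      have GBT: "G * Bt * Ti \<in> carrier_mat m m" using GB Ti by auto
      have 1: "mn Ti \<le> mn (Ti - cm \<cdot>\<^sub>m (G * Bt * Ti)) + mn (cm \<cdot>\<^sub>m (G * Bt * Ti))"
        by (rule mn_ge[of _ m m]) (use Ti GBT in auto)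
      have 2: "mn (Ti - cm \<cdot>\<^sub>m (G * Bt * Ti)) = nG" unfolding Geq[symmetric] nG_def ..
      have 3: "mn (cm \<cdot>\<^sub>m (G * Bt * Ti)) = mu * mn (G * Bt * Ti)" by (rule mncm)
      have 4: "mn (G * Bt * Ti) \<le> mn (G * Bt) * mn Ti" by (rule mn_mult[OF GB Ti(1)])
      have 5: "mn (G * Bt) \<le> nG * nBt" unfolding nG_def nBt_def by (rule mn_mult[OF G(1) Bt])
      have 6: "mn (G * Bt) * mn Ti \<le> (nG * nBt) * mn Ti" by (rule mult_right_mono[OF 5 mn_nonneg])
      have 7: "mu * mn (G * Bt * Ti) \<le> mu * ((nG * nBt) * mn Ti)"
        by (rule mult_left_mono) (use 4 6 mu in auto)
      have 8: "mu * ((nG * nBt) * mn Ti) = mn Ti * (mu * (nG * nBt))" by (simp add: ac_simps)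
      have 9: "mn Ti * (mu * (nG * nBt)) \<le> mn Ti * (1/2)" by (rule mult_left_mono[OF muBt mn_nonneg])
      from 1 2 3 7 8 9 show ?thesis by linarith
    qed
    define V where "V = Bt * R - R * Km"
    have V: "V \<in> carrier_mat m n" unfolding V_def using Bt R Km by auto
    have RK: "R * Km \<in> carrier_mat m n" and RF: "R * F \<in> carrier_mat m n" and BR: "Bt * R \<in> carrier_mat m n"
      using R Km F Bt by auto
    have RC: "R * C = Pt * R + cm \<cdot>\<^sub>m V"
    proof -
      have "R * C = R * (1\<^sub>m n - cm \<cdot>\<^sub>m Km) - R * F" unfolding Ceq
        by (rule mult_minus_distrib_mat[OF R]) (use Km F in auto)
      also have "R * (1\<^sub>m n - cm \<cdot>\<^sub>m Km) = R * 1\<^sub>m n - R * (cm \<cdot>\<^sub>m Km)"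
        by (rule mult_minus_distrib_mat[OF R]) (use Km in auto)
      also have "R * 1\<^sub>m n = R" using R by simp
      also have "R * (cm \<cdot>\<^sub>m Km) = cm \<cdot>\<^sub>m (R * Km)" by (rule mult_smult_distrib[OF R Km])
      finally have 1: "R * C = (R - cm \<cdot>\<^sub>m (R * Km)) - R * F" .
      have "Pt * R = (1\<^sub>m m - cm \<cdot>\<^sub>m Bt) * R - Ft * R" unfolding Pteq
        by (rule minus_mult_distrib_mat[OF _ Ft R]) (use Bt in auto)
      also have "(1\<^sub>m m - cm \<cdot>\<^sub>m Bt) * R = 1\<^sub>m m * R - (cm \<cdot>\<^sub>m Bt) * R"
        by (rule minus_mult_distrib_mat[OF _ _ R]) (use Bt in auto)
      also have "1\<^sub>m m * R = R" using R by simp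
      also have "(cm \<cdot>\<^sub>m Bt) * R = cm \<cdot>\<^sub>m (Bt * R)" by (rule mult_smult_assoc_mat[OF Bt R])
      finally have 2: "Pt * R = (R - cm \<cdot>\<^sub>m (Bt * R)) - R * F" unfolding hyp .
      show ?thesis unfolding 1 2 V_def by (rule lin_f[OF R RK RF BR])
    qed
    have TiRC: "Ti * (R * C) = R + cm \<cdot>\<^sub>m (Ti * V)"
    proof -
      have "Ti * (R * C) = Ti * (Pt * R) + Ti * (cm \<cdot>\<^sub>m V)" unfolding RC
        by (rule mult_add_distrib_mat[OF Ti(1)]) (use Pt R V in auto)
      also have "Ti * (Pt * R) = R" using Ti Pt R by (simp flip: assoc_mult_mat[of _ m m _ m _ n])
      also have "Ti * (cm \<cdot>\<^sub>m V) = cm \<cdot>\<^sub>m (Ti * V)" by (rule mult_smult_distrib[OF Ti(1) V])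
      finally show ?thesis .
    qed
    define U where "U = Pc * (Ti * V)"
    have U: "U \<in> carrier_mat n n" unfolding U_def using Pc Ti V by auto
    have TCe: "TCGC = 1\<^sub>m n - (Pc * R + cm \<cdot>\<^sub>m U)"
    proof -
      have "Pc * minv (prec_coarse L Mc Nc QDc Ac mu) * R * C = Pc * Ti * R * C"
        unfolding Ti_def Pt_def ..
      also have "\<dots> = (Pc * Ti) * (R * C)" by (rule assoc_mult_mat[of _ n m _ n]) (use Pc Ti(1) R C in auto)
      also have "\<dots> = Pc * (Ti * (R * C))" by (rule assoc_mult_mat[of _ n m _ m]) (use Pc Ti(1) R C in auto)
      also have "\<dots> = Pc * R + Pc * (cm \<cdot>\<^sub>m (Ti * V))" unfolding TiRC
        by (rule mult_add_distrib_mat[OF Pc]) (use R Ti V in auto)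
      also have "Pc * (cm \<cdot>\<^sub>m (Ti * V)) = cm \<cdot>\<^sub>m U" unfolding U_def
        by (rule mult_smult_distrib[OF Pc]) (use Ti V in auto)
      finally show ?thesis unfolding TCGC C_def by simp
    qed
    have TC: "TCGC \<in> carrier_mat n n" unfolding TCe using PR U by auto
    have TCW: "TCGC - W = (- cm) \<cdot>\<^sub>m U" unfolding TCe W_def by (rule lin_g[OF PR U])
    have mnU: "mn U \<le> nPc * (2 * nG) * (nBt * nR + nR * nKm)"
    proof -
      have TV: "Ti * V \<in> carrier_mat m n" using Ti V by auto
      have 1: "mn U \<le> nPc * mn (Ti * V)" unfolding U_def nPc_def by (rule mn_mult[OF Pc TV])
      have 2: "mn (Ti * V) \<le> mn Ti * mn V" by (rule mn_mult[OF Ti(1) V])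
      have 3: "mn V \<le> mn (Bt * R) + mn (R * Km)" unfolding V_def by (rule mn_minus[OF BR RK])
      have 4: "mn (Bt * R) \<le> nBt * nR" unfolding nBt_def nR_def by (rule mn_mult[OF Bt R])
      have 5: "mn (R * Km) \<le> nR * nKm" unfolding nKm_def nR_def by (rule mn_mult[OF R Km])
      have 6: "mn V \<le> nBt * nR + nR * nKm" using 3 4 5 by linarith
      have 7: "mn Ti * mn V \<le> (2 * nG) * (nBt * nR + nR * nKm)"
        by (rule mult_mono[OF mnTi 6]) (use nn in \<open>auto simp: mn_nonneg\<close>)
      have 8: "nPc * mn (Ti * V) \<le> nPc * ((2 * nG) * (nBt * nR + nR * nKm))"
        by (rule mult_left_mono) (use 2 7 nn in auto)
      from 1 8 show ?thesis by (simp add: ac_simps)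
    qed
    have mnTCW: "mn (TCGC - W) \<le> mu * b2"
      unfolding TCW cm_def mn_cr' b2_def using mnU mu by (simp add: mult_left_mono)
    have mnTC: "mn TCGC \<le> b2 + nW"
    proof -
      have "mn TCGC \<le> mn (TCGC - W) + mn W" by (rule mn_ge[OF TC W])
      also have "\<dots> \<le> mu * b2 + nW" unfolding nW_def using mnTCW by simp
      also have "mu * b2 \<le> b2" using mu1 b2 mu by (intro mult_left_le_one_le) auto
      finally show ?thesis by simp
    qed
    define T where "T = TS' * TCGC"
    have T: "T \<in> carrier_mat n n" unfolding T_def using TS' TC by auto
    have TS'F: "TS' - F \<in> carrier_mat n n" using TS' F by auto
    have TCW': "TCGC - W \<in> carrier_mat n n" using TC W by auto
    have TT0: "T - T0 = (TS' - F) * TCGC + F * (TCGC - W)"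
    proof -
      have 1: "(TS' - F) * TCGC = TS' * TCGC - F * TCGC" by (rule minus_mult_distrib_mat[OF TS' F TC])
      have 2: "F * (TCGC - W) = F * TCGC - F * W" by (rule mult_minus_distrib_mat[OF F TC W])
      have "(TS' - F) * TCGC + F * (TCGC - W) = (TS' * TCGC - F * TCGC) + (F * TCGC - F * W)"
        unfolding 1 2 ..
      also have "\<dots> = TS' * TCGC - F * W" by (rule mat_sub_telescope) (use TS' F TC W in auto)
      finally show ?thesis unfolding T_def T0_def by simp
    qed
    have mnTT0: "mn (T - T0) \<le> mu * bD"
    proof -
      have "mn (T - T0) \<le> mn ((TS' - F) * TCGC) + mn (F * (TCGC - W))"
        unfolding TT0 by (rule mn_add[of _ n n]) (use TS'F TC F TCW' in auto)
      also have "mn ((TS' - F) * TCGC) \<le> mn (TS' - F) * mn TCGC" by (rule mn_mult[OF TS'F TC])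
      also have "mn (F * (TCGC - W)) \<le> mn F * mn (TCGC - W)" by (rule mn_mult[OF F TCW'])
      also have "mn (TS' - F) * mn TCGC \<le> (mu * b1) * (b2 + nW)"
        using mnTSF mnTC by (intro mult_mono) (use mu nn b1 b2 in \<open>auto simp: mn_nonneg\<close>)
      also have "mn F * mn (TCGC - W) \<le> nF * (mu * b2)"
        unfolding nF_def using mnTCW by (intro mult_left_mono) (use mu nn b1 b2 in \<open>auto simp: mn_nonneg\<close>)
      finally show ?thesis unfolding bD_def by (simp add: algebra_simps)
    qed
    have mnT: "mn T \<le> S"
    proof -
      have "mn T \<le> mn (T - T0) + mn T0" by (rule mn_ge[OF T T0])
      also have "\<dots> \<le> mu * bD + mn T0" using mnTT0 by simp
      also have "mu * bD \<le> bD" using mu1 bD mu by (intro mult_left_le_one_le) auto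
      finally show ?thesis unfolding S_def by simp
    qed
    have mnT0: "mn T0 \<le> S" unfolding S_def using bD by simp
    have "mn (T ^\<^sub>m L - T0 ^\<^sub>m L) \<le> real L * real n * S ^ L * mn (T - T0)"
      by (rule pow_pert[OF T0 T mnT0 mnT S1])
    also have "T ^\<^sub>m L - T0 ^\<^sub>m L = T ^\<^sub>m L" unfolding T0L by (rule lin_h) (use T in auto)
    finally have "mn (T ^\<^sub>m L) \<le> real L * real n * S ^ L * mn (T - T0)" .
    also have "\<dots> \<le> real L * real n * S ^ L * (mu * bD)"
      using mnTT0 S1 by (intro mult_left_mono) auto
    finally have mnTL: "mn (T ^\<^sub>m L) \<le> c0 * mu" unfolding c0_def by (simp add: algebra_simps)
    have rho: "spectral_radius T ^ L \<le> c0 * mu" using sr_bound[OF T npos, of L] mnTL by simp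
    have rho0: "0 \<le> spectral_radius T"
      using spectral_radius_mem_max(1)[OF T npos] by auto
    have "spectral_radius T \<le> c * mu powr (1 / real L)"
    proof (rule ccontr)
      assume "\<not> ?thesis"
      hence lt: "c * mu powr (1 / real L) < spectral_radius T" by simp
      have "(c * mu powr (1 / real L)) ^ L < spectral_radius T ^ L"
        by (rule power_strict_mono[OF lt]) (use cpos mu assms(1) in auto)
      also have "(c * mu powr (1 / real L)) ^ L = (c0 + 1) * mu"
        unfolding c_def power_mult_distrib using assms(1) mu c0
        by (simp add: powr_realpow[symmetric] powr_powr)
      finally show False using rho mu by (smt (verit, best) mult_right_mono)
    qed
    thus ?thesis unfolding T_def TSe[symmetric] .
  qed
  show ?thesis
  proof (intro exI conjI allI impI)
    show "0 < mu0" by (rule mu0)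
    show "0 < c" by (rule cpos)
  next
    fix mu assume H: "0 < mu \<and> mu < mu0 \<and> invertible_mat (prec_fine L M N QD A mu) \<and>
          invertible_mat (prec_coarse L Mc Nc QDc Ac mu)"
    show "let C = coll_C L M N (coll_Q M tau) A mu;
           TS = 1\<^sub>m (L * M * N) - minv (prec_fine L M N QD A mu) * C;
           TCGC = 1\<^sub>m (L * M * N)
                  - kron (1\<^sub>m L) (kron (cmat TCFQ) (cmat TCFA))
                    * minv (prec_coarse L Mc Nc QDc Ac mu)
                    * kron (1\<^sub>m L) (kron (cmat TFCQ) (cmat TFCA)) * C
       in spectral_radius (TS * TCGC) \<le> c * mu powr (1 / real L)"
      unfolding Let_def
      by (rule main) (use H in \<open>simp_all add: n_def Pc_def R_def Xc_def Xr_def\<close>)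
  qed
qed


end
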